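(* Let $S\ge 2$. As $m\to\infty$, $$B(m,m,\dots,m)\sim\frac{S^{Sm+\frac12}}{(2\pi m)^{\frac{S-1}{2}}\,(S-1)^S},$$ where $B$ has $S$ arguments all equal to $m$.
   Context: For positive integers $m_1,\dots,m_S$, $B(m_1,\dots,m_S)=\sum_{\ell_1=0}^{m_1-1}\cdots\sum_{\ell_S=0}^{m_S-1}\frac{(\ell_1+\dots+\ell_S)!}{\ell_1!\cdots\ell_S!}$. *)

theory Defs
  imports "HOL-Analysis.Analysis" "HOL-Library.Landau_Symbols"
begin

definition B :: "nat \<Rightarrow> (nat \<Rightarrow> nat) \<Rightarrow> real" where
  "B S m = (\<Sum>l \<in> PiE {..<S} (\<lambda>i. {..<m i}).
      real (fact (\<Sum>i<S. l i)) / (\<Prod>i<S. real (fact (l i))))"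

end

theory Submission
  imports Defs
begin


lemma ln_lower3:
  fixes x :: real assumes "0 \<le> x"
  shows "x - x^2/2 \<le> ln (1 + x)"
proof -
  let ?f = "\<lambda>x::real. ln (1 + x) - x + x^2/2"
  have "?f 0 \<le> ?f x"
  proof (rule DERIV_nonneg_imp_nondecreasing[OF assms])
    fix y :: real assume y: "0 \<le> y" "y \<le> x"
    have "DERIV ?f y :> (1/(1+y) - 1 + y)"
      using y by (auto intro!: derivative_eq_intros)
    moreover have "1/(1+y) - 1 + y = y^2/(1+y)" using y by (simp add: field_simps power2_eq_square)
    moreover have "y^2/(1+y) \<ge> 0" using y by simp
    ultimately show "\<exists>d. DERIV ?f y :> d \<and> d \<ge> 0" by auto
  qed
  then show ?thesis by simp
qed

lemma ln_upper3:
  fixes x :: real assumes "0 \<le> x"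
  shows "ln (1 + x) \<le> x - x^2/2 + x^3/3"
proof -
  let ?f = "\<lambda>x::real. x - x^2/2 + x^3/3 - ln (1 + x)"
  have "?f 0 \<le> ?f x"
  proof (rule DERIV_nonneg_imp_nondecreasing[OF assms])
    fix y :: real assume y: "0 \<le> y" "y \<le> x"
    have "DERIV ?f y :> (1 - y + y^2 - 1/(1+y))"
      using y by (auto intro!: derivative_eq_intros simp: power2_eq_square)
    moreover have "1 - y + y^2 - 1/(1+y) = y^3/(1+y)" using y by (simp add: field_simps power2_eq_square power3_eq_cube)
    moreover have "y^3/(1+y) \<ge> 0" using y by simp
    ultimately show "\<exists>d. DERIV ?f y :> d \<and> d \<ge> 0" by auto
  qed
  then show ?thesis by simp
qed



definition stq :: "nat \<Rightarrow> real" where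
  "stq n = fact n / (sqrt (real n) * (real n / exp 1) ^ n)"

definition sta :: "nat \<Rightarrow> real" where
  "sta n = ln (fact n) - (real n + 1/2) * ln (real n) + real n"

lemma stq_sta: "n \<ge> 1 \<Longrightarrow> stq n = exp (sta n)"
proof -
  assume n: "n \<ge> 1"
  have "exp (sta n) = exp (ln (fact n)) * exp (real n) / exp ((real n + 1/2) * ln (real n))"
    unfolding sta_def by (simp add: exp_add exp_diff)
  also have "exp ((real n + 1/2) * ln (real n)) = real n powr (real n + 1/2)"
    using n by (simp add: powr_def)
  also have "\<dots> = real n ^ n * sqrt (real n)"
    using n by (simp add: powr_add powr_half_sqrt powr_realpow)
  finally have "exp (sta n) = fact n * exp (real n) / (real n ^ n * sqrt (real n))"
    by simp
  also have "\<dots> = stq n"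
    unfolding stq_def using n by (simp add: power_divide exp_of_nat_mult[symmetric] field_simps)
  finally show ?thesis by simp
qed

lemma sta_diff_bound:
  assumes n: "n \<ge> 1"
  shows "\<bar>sta n - sta (Suc n)\<bar> \<le> 1 / real n ^ 2"
proof -
  have nr: "real n \<ge> 1" using n by simp
  have lf: "ln (fact (Suc n) :: real) = ln (real n + 1) + ln (fact n)"
    by (simp add: ln_mult add.commute)
  have "sta n - sta (Suc n) = (real n + 1/2) * (ln (real n + 1) - ln (real n)) - 1"
    unfolding sta_def using n by (simp only: lf) (simp add: algebra_simps)
  also have "ln (real n + 1) - ln (real n) = ln (1 + 1 / real n)"
  proof -
    have "1 + 1 / real n = (real n + 1) / real n" using nr by (simp add: field_simps)
    then show ?thesis using nr by (simp add: ln_div)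
  qed
  finally have eq: "sta n - sta (Suc n) = (real n + 1/2) * ln (1 + 1 / real n) - 1" .
  define x where "x = 1 / real n"
  have x0: "x > 0" "x \<le> 1" using nr by (auto simp: x_def)
  have nx: "real n = 1 / x" using nr by (simp add: x_def)
  have lo: "x - x^2/2 \<le> ln (1 + x)" by (rule ln_lower3) (use x0 in auto)
  have hi: "ln (1 + x) \<le> x - x^2/2 + x^3/3" by (rule ln_upper3) (use x0 in auto)
  have hp: "real n + 1/2 > 0" using nr by simp
  have A: "(real n + 1/2) * ln (1 + x) - 1 \<ge> (real n + 1/2) * (x - x^2/2) - 1"
    using mult_left_mono[OF lo, of "real n + 1/2"] hp by linarith
  have B: "(real n + 1/2) * ln (1 + x) - 1 \<le> (real n + 1/2) * (x - x^2/2 + x^3/3) - 1"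
    using mult_left_mono[OF hi, of "real n + 1/2"] hp by linarith
  have A': "(real n + 1/2) * (x - x^2/2) - 1 = -(x^2/4)"
    unfolding nx using x0 by (simp add: field_simps power2_eq_square)
  have B': "(real n + 1/2) * (x - x^2/2 + x^3/3) - 1 = x^2/12 + x^3/6"
    unfolding nx using x0 by (simp add: field_simps power2_eq_square power3_eq_cube)
  have x3: "x^3 \<le> x^2" using x0 by (simp add: power3_eq_cube power2_eq_square mult_left_le)
  have "\<bar>(real n + 1/2) * ln (1 + x) - 1\<bar> \<le> x^2"
    unfolding abs_le_iff using A B A' B' x3 x0 zero_le_power2[of x] by linarith
  moreover have "x^2 = 1 / real n ^ 2" by (simp add: x_def power_divide)
  ultimately show ?thesis using eq x_def by simp
qed

lemma sta_convergent: "\<exists>A. (\<lambda>n. sta (Suc n)) \<longlonglongrightarrow> A"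
proof -
  define b where "b k = sta (Suc k) - sta (Suc (Suc k))" for k
  have bb: "norm (b k) \<le> inverse (real (Suc k) ^ 2)" for k
    using sta_diff_bound[of "Suc k"] by (simp add: b_def divide_inverse)
  have "summable (\<lambda>k. inverse (real (Suc k) ^ 2))"
    using inverse_power_summable[of 2, where 'a=real] by (subst summable_Suc_iff) simp
  then have sb: "summable b" by (rule summable_comparison_test'[OF _ bb])
  have eq: "sta (Suc n) = sta 1 - (\<Sum>k<n. b k)" for n
    by (induction n) (simp_all add: b_def)
  have "(\<lambda>n. sta 1 - (\<Sum>k<n. b k)) \<longlonglongrightarrow> sta 1 - suminf b"
    by (intro tendsto_intros summable_LIMSEQ sb)
  then show ?thesis unfolding eq by blast
qed



lemma wallis_fact:
  "(\<Prod>k=1..n. (4*real k^2) / (4*real k^2 - 1)) =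
     16^n * (fact n)^4 / ((fact (2*n))^2 * (2*real n + 1))"
proof (induction n)
  case 0 then show ?case by simp
next
  case (Suc n)
  have "(\<Prod>k=1..Suc n. (4*real k^2) / (4*real k^2 - 1)) =
        (\<Prod>k=1..n. (4*real k^2) / (4*real k^2 - 1)) * ((4*real (Suc n)^2) / (4*real (Suc n)^2 - 1))"
    by (simp add: prod.nat_ivl_Suc')
  also have "\<dots> = 16^n * (fact n)^4 / ((fact (2*n))^2 * (2*real n + 1)) * ((4*real (Suc n)^2) / (4*real (Suc n)^2 - 1))"
    using Suc by simp
  also have "\<dots> = 16^(Suc n) * (fact (Suc n))^4 / ((fact (2*Suc n))^2 * (2*real (Suc n) + 1))"
  proof -
    have f2: "fact (2 * Suc n) = (2 * real n + 2) * (2 * real n + 1) * (fact (2*n) :: real)"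
      by (simp add: algebra_simps)
    have f1: "fact (Suc n) = (real n + 1) * (fact n :: real)" by simp
    have d: "4*real (Suc n)^2 - 1 = (2*real n + 1) * (2*real n+3)" by (simp add: algebra_simps power2_eq_square)
    have p: "(fact n :: real) > 0" "(fact (2*n) :: real) > 0" by auto
    have gen: "16^n * a^4 / (b^2 * (2*x + 1)) * (4*(x+1)^2 / ((2*x+1)*(2*x+3))) =
       16 * 16^n * ((x+1)*a)^4 / (((2*x+2)*(2*x+1)*b)^2 * (2*x+3))"
      if "a > 0" "b > 0" "x \<ge> 0" for a b x :: real
    proof -
      have q1: "(2*x+2)^2 = 4*(x+1)^2" by (simp add: power2_eq_square algebra_simps)
      have "16 * 16^n * ((x+1)*a)^4 / (((2*x+2)*(2*x+1)*b)^2 * (2*x+3))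
          = (16 * 16^n * (x+1)^4 * a^4) / (4*(x+1)^2*(2*x+1)^2*b^2 * (2*x+3))"
        by (simp add: power_mult_distrib q1)
      also have "\<dots> = (4 * 16^n * (x+1)^2 * a^4) / ((2*x+1)^2*b^2 * (2*x+3))"
      proof -
        have nz: "x + 1 \<noteq> 0" "2*x+1 \<noteq> 0" "2*x+3 \<noteq> 0" "a \<noteq> 0" "b \<noteq> 0" using that by auto
        show ?thesis using nz by (simp add: divide_simps)
      qed
      also have "\<dots> = 16^n * a^4 / (b^2 * (2*x + 1)) * (4*(x+1)^2 / ((2*x+1)*(2*x+3)))"
        by (simp add: power2_eq_square mult_ac)
      finally show ?thesis by simp
    qed
    have r: "16^(Suc n) * (fact (Suc n))^4 / ((fact (2*Suc n))^2 * (2*real (Suc n) + 1)) =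
       16*16^n*((real n+1)*fact n)^4/(((2*real n+2)*(2*real n+1)*fact(2*n))^2*(2*real n+3))"
      unfolding f1 f2 by (simp add: mult_ac)
    have l: "4*real (Suc n)^2 / (4*real (Suc n)^2 - 1) = 4*(real n+1)^2/((2*real n+1)*(2*real n+3))"
      by (simp add: power2_eq_square algebra_simps)
    show ?thesis unfolding r l using gen[OF p, of "real n"] by simp
  qed
  finally show ?case .
qed

lemma fact_stq: "n \<ge> 1 \<Longrightarrow> fact n = stq n * sqrt (real n) * (real n / exp 1) ^ n"
  unfolding stq_def by (simp add: field_simps)

lemma wallis_stq:
  assumes n: "n \<ge> 1"
  shows "16^n * (fact n)^4 / ((fact (2*n))^2 * (2*real n + 1)) =
         stq n ^ 4 / stq (2*n) ^ 2 * (real n / (2 * (2 * real n + 1)))"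
proof -
  define e where "e = real n / exp 1"
  have e2: "real (2*n) / exp 1 = 2 * e" by (simp add: e_def)
  have "(fact n :: real)^4 = stq n ^ 4 * real n ^ 2 * e ^ (4*n)"
  proof -
    have s4: "sqrt (real n) ^ 4 = real n ^ 2"
      using power_mult[of "sqrt (real n)" 2 2] by simp
    show ?thesis using fact_stq[OF n] s4 by (simp add: e_def power_mult_distrib power_mult[symmetric] mult.commute)
  qed
  moreover have "(fact (2*n) :: real)^2 = stq (2*n) ^ 2 * (2 * real n) * (2^(2*n))^2 * e ^ (4*n)"
  proof -
    have "(fact (2*n) :: real) = stq (2*n) * sqrt (real (2*n)) * (2*e)^(2*n)"
      using fact_stq[of "2*n"] n e2 by simp
    then show ?thesis by (simp add: power_mult_distrib power_mult[symmetric] mult.commute)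
  qed
  moreover have "(2^(2*n))^2 = (16::real)^n"
  proof -
    have "(2^(2*n))^2 = (2::real)^(2*n*2)" by (simp only: power_mult)
    also have "\<dots> = (2^4)^n" by (simp only: power_mult[symmetric]) (simp add: mult.commute)
    finally show ?thesis by simp
  qed
  moreover have "stq n > 0" "stq (2*n) > 0" "e > 0"
    using n unfolding stq_def e_def by auto
  moreover have gen: "16^n * (q^4 * x^2 * E) / ((r^2 * (2*x) * H * E) * (2*x+1)) = q^4 / r^2 * (x / (2*(2*x+1)))"
    if "q > 0" "r > 0" "x > 0" "E > 0" "H = 16^n" for q r x E H :: real
    using that by (simp add: divide_simps power2_eq_square)
  ultimately show ?thesis using n by simp
qed



lemma stq_limit: "stq \<longlonglongrightarrow> sqrt (2*pi)"
proof -
  obtain A where A: "(\<lambda>n. sta (Suc n)) \<longlonglongrightarrow> A" using sta_convergent by blast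
  define c where "c = exp A"
  have c0: "c > 0" by (simp add: c_def)
  have "(\<lambda>n. stq (Suc n)) \<longlonglongrightarrow> c"
    unfolding c_def using tendsto_exp[OF A] stq_sta[of "Suc _"] by simp
  then have L: "stq \<longlonglongrightarrow> c" by (rule LIMSEQ_imp_Suc)
  have L2: "(\<lambda>n. stq (2*n)) \<longlonglongrightarrow> c"
  proof -
    have "strict_mono (\<lambda>n::nat. 2*n)" by (rule strict_monoI) simp
    from LIMSEQ_subseq_LIMSEQ[OF L this] show ?thesis by (simp add: o_def)
  qed
  have L3: "(\<lambda>n. real n / (2 * (2 * real n + 1))) \<longlonglongrightarrow> 1/4"
    by real_asymp
  have W1: "(\<lambda>n. stq n ^ 4 / stq (2*n) ^ 2 * (real n / (2 * (2 * real n + 1)))) \<longlonglongrightarrow> c^4 / c^2 * (1/4)"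
    using c0 by (intro tendsto_intros L L2 L3) simp
  have W2: "(\<lambda>n. (\<Prod>k=1..n. (4*real k^2) / (4*real k^2 - 1))) \<longlonglongrightarrow> c^4 / c^2 * (1/4)"
  proof (rule Lim_transform_eventually[OF W1])
    show "\<forall>\<^sub>F n in sequentially. stq n ^ 4 / stq (2*n) ^ 2 * (real n / (2 * (2 * real n + 1))) =
           (\<Prod>k=1..n. (4*real k^2) / (4*real k^2 - 1))"
      using eventually_ge_at_top[of "1::nat"]
      by eventually_elim (subst wallis_fact, rule wallis_stq[symmetric], simp)
  qed
  have "c^4 / c^2 * (1/4) = pi / 2" using LIMSEQ_unique[OF W2 wallis] .
  moreover have "c^4 / c^2 * (1/4) = c^2/4" using c0 by (simp add: power2_eq_square power4_eq_xxxx)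
  ultimately have "c^2 = 2 * pi" by simp
  then have "c = sqrt (2*pi)" using c0 real_sqrt_unique[of c "2*pi"] by simp
  then show ?thesis using L by simp
qed

theorem stirling_ratio:
  "(\<lambda>n. fact n / (sqrt (2*pi*real n) * (real n / exp 1) ^ n)) \<longlonglongrightarrow> 1"
proof -
  have "(\<lambda>n. stq n / sqrt (2*pi)) \<longlonglongrightarrow> sqrt (2*pi) / sqrt (2*pi)"
    by (intro tendsto_intros stq_limit) simp
  then have "(\<lambda>n. stq n / sqrt (2*pi)) \<longlonglongrightarrow> 1" by simp
  then show ?thesis
    by (rule Lim_transform_eventually)
       (use eventually_ge_at_top[of "1::nat"] in \<open>eventually_elim, simp add: stq_def real_sqrt_mult field_simps\<close>)
qed



definition mm :: "nat \<Rightarrow> (nat \<Rightarrow> nat) \<Rightarrow> real" where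
  "mm S t = real (fact (\<Sum>i<S. t i)) / (\<Prod>i<S. real (fact (t i)))"

lemma mm_cong: "(\<And>i. i < S \<Longrightarrow> t i = u i) \<Longrightarrow> mm S t = mm S u"
proof -
  assume h: "\<And>i. i < S \<Longrightarrow> t i = u i"
  have "(\<Sum>i<S. t i) = (\<Sum>i<S. u i)" by (rule sum.cong) (auto simp: h)
  moreover have "(\<Prod>i<S. real (fact (t i))) = (\<Prod>i<S. real (fact (u i)))" by (rule prod.cong) (auto simp: h)
  ultimately show ?thesis unfolding mm_def by simp
qed

lemma mm_nonneg: "mm S t \<ge> 0"
  unfolding mm_def by (simp add: prod_nonneg)

lemma mm_pos: "mm S t > 0"
  unfolding mm_def by (simp add: prod_pos)

lemma sum_upd_nat:
  fixes S i :: nat and t :: "nat \<Rightarrow> nat"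
  assumes "i < S"
  shows "(\<Sum>j<S. (t(i := v)) j) + t i = (\<Sum>j<S. t j) + (v::nat)"
proof -
  have "(\<Sum>j<S. (t(i := v)) j) = v + (\<Sum>j\<in>{..<S} - {i}. t j)"
  proof -
    have "(\<Sum>j<S. (t(i := v)) j) = (t(i := v)) i + (\<Sum>j\<in>{..<S} - {i}. (t(i := v)) j)"
      by (rule sum.remove) (use assms in auto)
    also have "(\<Sum>j\<in>{..<S} - {i}. (t(i := v)) j) = (\<Sum>j\<in>{..<S} - {i}. t j)"
      by (intro sum.cong) auto
    finally show ?thesis by simp
  qed
  moreover have "(\<Sum>j<S. t j) = t i + (\<Sum>j\<in>{..<S} - {i}. t j)"
    by (rule sum.remove) (use assms in auto)
  ultimately show ?thesis by simp
qed

lemma mm_step: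
  fixes S i :: nat
  assumes "i < S"
  shows "mm S (t(i := Suc (t i))) * real (Suc (t i)) = mm S t * real (Suc (\<Sum>j<S. t j))"
proof -
  define P where "P = (\<Prod>j\<in>{..<S} - {i}. real (fact (t j)))"
  have P0: "P > 0" unfolding P_def by (simp add: prod_pos)
  have s: "(\<Sum>j<S. (t(i := Suc (t i))) j) = Suc (\<Sum>j<S. t j)"
    using sum_upd_nat[OF assms, of t "Suc (t i)"] by simp
  have p1: "(\<Prod>j<S. real (fact ((t(i := Suc (t i))) j))) = real (fact (Suc (t i))) * P"
  proof -
    have "(\<Prod>j<S. real (fact ((t(i := Suc (t i))) j))) = real (fact ((t(i := Suc (t i))) i)) * (\<Prod>j\<in>{..<S} - {i}. real (fact ((t(i := Suc (t i))) j)))"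
      by (rule prod.remove) (use assms in auto)
    also have "(\<Prod>j\<in>{..<S} - {i}. real (fact ((t(i := Suc (t i))) j))) = P"
      unfolding P_def by (intro prod.cong) auto
    finally show ?thesis by simp
  qed
  have p2: "(\<Prod>j<S. real (fact (t j))) = real (fact (t i)) * P"
    unfolding P_def by (rule prod.remove) (use assms in auto)
  have f: "real (fact (Suc n)) = real (Suc n) * real (fact n)" for n by (simp add: algebra_simps)
  show ?thesis unfolding mm_def s p1 p2 f using P0
    by (simp add: field_simps del: of_nat_Suc)
qed



lemma all_eq_of_sum:
  fixes t :: "nat \<Rightarrow> nat" and S m :: nat
  assumes "\<forall>i<S. t i \<le> m" "(\<Sum>i<S. t i) \<ge> S*m"
  shows "\<forall>i<S. t i = m"
proof (rule ccontr)
  assume "\<not> (\<forall>i<S. t i = m)"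
  then obtain i where i: "i < S" "t i < m" using assms(1) by (meson le_neq_implies_less)
  have "(\<Sum>i<S. t i) < (\<Sum>i<S. m)"
    by (rule sum_strict_mono_ex1) (use assms(1) i in auto)
  then show False using assms(2) by simp
qed

lemma sum_le_Sm:
  fixes t :: "nat \<Rightarrow> nat" and S m :: nat
  assumes "\<forall>i<S. t i \<le> m"
  shows "(\<Sum>i<S. t i) \<le> S*m"
proof -
  have "(\<Sum>i<S. t i) \<le> (\<Sum>i<S. m)" by (rule sum_mono) (use assms in auto)
  then show ?thesis by simp
qed

lemma dom_aux:
  fixes S m :: nat
  assumes S: "S \<ge> 2"
  shows "\<forall>t. (\<forall>i<S. t i \<le> m) \<longrightarrow> (\<exists>i<S. t i > 0) \<longrightarrow> S*m - (\<Sum>i<S. t i) = D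
            \<longrightarrow> mm S t \<le> mm S (\<lambda>_. m) * (2/3)^D"
proof (induction D)
  case 0
  show ?case
  proof (intro allI impI)
    fix t :: "nat \<Rightarrow> nat"
    assume b: "\<forall>i<S. t i \<le> m" and "S*m - (\<Sum>i<S. t i) = 0"
    then have "(\<Sum>i<S. t i) \<ge> S*m" by simp
    with b have "\<forall>i<S. t i = m" by (rule all_eq_of_sum)
    then have "mm S t = mm S (\<lambda>_. m)" by (intro mm_cong) auto
    then show "mm S t \<le> mm S (\<lambda>_. m) * (2/3)^0" by simp
  qed
next
  case (Suc D)
  show ?case
  proof (intro allI impI)
    fix t :: "nat \<Rightarrow> nat"
    assume b: "\<forall>i<S. t i \<le> m" and pos: "\<exists>i<S. t i > 0" and d: "S*m - (\<Sum>i<S. t i) = Suc D"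
    define T where "T = (\<Sum>i<S. t i)"
    have TS: "T < S*m" using d unfolding T_def by simp
    obtain i0 where i0: "i0 < S" "t i0 < m"
    proof -
      have "\<not> (\<forall>i<S. t i = m)"
      proof
        assume "\<forall>i<S. t i = m"
        then have "T = S*m" unfolding T_def by simp
        with TS show False by simp
      qed
      then show ?thesis using that b by (meson le_neq_implies_less)
    qed
    define a where "a = Min (t ` {..<S})"
    have ne: "t ` {..<S} \<noteq> {}" using S by (auto simp: lessThan_empty_iff)
    have "a \<in> t ` {..<S}" unfolding a_def by (rule Min_in) (use ne in auto)
    then obtain i where i: "i < S" "t i = a" by auto
    have amin: "\<forall>j<S. a \<le> t j" unfolding a_def by auto
    have am: "a < m" using amin i0 by (meson order.strict_trans1)
    define t' where "t' = t(i := Suc (t i))"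
    have b': "\<forall>j<S. t' j \<le> m" using b i am unfolding t'_def by auto
    have pos': "\<exists>j<S. t' j > 0" using i unfolding t'_def by auto
    have sT: "(\<Sum>j<S. t' j) = Suc T"
      using sum_upd_nat[OF i(1), of t "Suc (t i)"] unfolding t'_def T_def by simp
    have d': "S*m - (\<Sum>j<S. t' j) = D" using d sT unfolding T_def by simp
    have IH: "mm S t' \<le> mm S (\<lambda>_. m) * (2/3)^D"
      using Suc.IH b' pos' d' by blast
    have step: "mm S t' * real (Suc a) = mm S t * real (Suc T)"
      using mm_step[OF i(1), of t] i unfolding t'_def T_def by simp
    have ratio: "3 * (a+1) \<le> 2 * (T+1)"
    proof (cases "\<exists>j<S. t j > a")
      case True
      then obtain j where j: "j < S" "t j > a" by auto
      have ij: "i \<noteq> j" using i j by auto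
      have "t i + t j = sum t {i, j}" using ij by simp
      also have "\<dots> \<le> sum t {..<S}" by (rule sum_mono2) (use i j in auto)
      finally have "T \<ge> 2*a + 1" using i j unfolding T_def by simp
      then show ?thesis by simp
    next
      case False
      then have all: "\<forall>j<S. t j = a" using amin by (metis le_antisym not_less)
      then have "T = S * a" unfolding T_def by simp
      moreover have "a > 0" using pos all by auto
      moreover have "S * a \<ge> 2 * a" using S by (rule mult_right_mono) simp
      ultimately have "2 * a \<le> T" "0 < a" by simp_all
      then show ?thesis by presburger
    qed
    have Tp: "real (Suc T) > 0" by simp
    have "mm S t = mm S t' * (real (Suc a) / real (Suc T))"
      using step Tp by (simp add: field_simps)
    also have "\<dots> \<le> mm S (\<lambda>_. m) * (2/3)^D * (2/3)"
    proof (rule mult_mono)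
      show "real (Suc a) / real (Suc T) \<le> 2/3"
        using ratio Tp by (simp add: field_simps)
    qed (use IH mm_nonneg in auto)
    finally show "mm S t \<le> mm S (\<lambda>_. m) * (2/3)^Suc D" by (simp add: mult_ac)
  qed
qed

lemma mm_zero: "(\<forall>i<S. t i = 0) \<Longrightarrow> mm S t = 1"
  unfolding mm_def by simp

lemma dom_bound:
  fixes S m :: nat and t :: "nat \<Rightarrow> nat"
  assumes S: "S \<ge> 2" and m: "m \<ge> 1" and b: "\<forall>i<S. t i \<le> m"
  shows "mm S t \<le> 3/2 * mm S (\<lambda>_. m) * (2/3)^(S*m - (\<Sum>i<S. t i))"
proof (cases "\<exists>i<S. t i > 0")
  case True
  then have "mm S t \<le> mm S (\<lambda>_. m) * (2/3)^(S*m - (\<Sum>i<S. t i))"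
    using dom_aux[OF S, of m "S*m - (\<Sum>i<S. t i)"] b by blast
  moreover have "mm S (\<lambda>_. m) * (2/3)^(S*m - (\<Sum>i<S. t i)) \<ge> 0" using mm_nonneg by simp
  ultimately show ?thesis by linarith
next
  case False
  then have z: "\<forall>i<S. t i = 0" by auto
  define e :: "nat \<Rightarrow> nat" where "e = (\<lambda>i. if i = 0 then 1 else 0)"
  have se: "(\<Sum>i<S. e i) = 1" using S unfolding e_def by (simp add: sum.delta)
  have pe: "(\<Prod>i<S. real (fact (e i))) = 1" unfolding e_def by (intro prod.neutral) auto
  have "mm S e = 1" unfolding mm_def se pe by simp
  moreover have "mm S e \<le> mm S (\<lambda>_. m) * (2/3)^(S*m - 1)"
  proof -
    have "\<forall>i<S. e i \<le> m" using m unfolding e_def by auto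
    moreover have "\<exists>i<S. e i > 0" using S unfolding e_def by (intro exI[of _ 0]) auto
    moreover have "S*m - (\<Sum>i<S. e i) = S*m - 1" using se by simp
    ultimately show ?thesis using dom_aux[OF S, of m "S*m - 1"] by blast
  qed
  moreover have sm1: "S*m \<ge> 1" using S m by simp
  have pw: "(2/3::real)^(S*m - 1) = 3/2 * (2/3)^(S*m)"
  proof -
    obtain k where k: "S*m = Suc k" using sm1 by (cases "S*m") auto
    show ?thesis unfolding k by simp
  qed
  have zt: "(\<Sum>i<S. t i) = 0" using z by simp
  have X: "mm S (\<lambda>_. m) * (2/3)^(S*m - 1) = 3/2 * mm S (\<lambda>_. m) * (2/3)^(S*m)" using pw by simp
  ultimately have "1 \<le> 3/2 * mm S (\<lambda>_. m) * (2/3)^(S*m)" by linarith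
  then show ?thesis using mm_zero[OF z] unfolding zt by simp
qed



lemma lim_ratio_lin:
  fixes a c1 c2 :: real
  assumes a: "a > 0"
  shows "(\<lambda>m::nat. (real m + c1) / (a * real m + c2)) \<longlonglongrightarrow> 1/a"
proof -
  have "(\<lambda>m::nat. (1 + c1 / real m) / (a + c2 / real m)) \<longlonglongrightarrow> (1 + 0) / (a + 0)"
    using a by (intro tendsto_intros lim_const_over_n) auto
  then have L: "(\<lambda>m::nat. (1 + c1 / real m) / (a + c2 / real m)) \<longlonglongrightarrow> 1/a" by simp
  show ?thesis
  proof (rule Lim_transform_eventually[OF L])
    show "\<forall>\<^sub>F m in sequentially. (1 + c1 / real m) / (a + c2 / real m) = (real m + c1) / (a * real m + c2)"
      using eventually_ge_at_top[of "1::nat"]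
    proof eventually_elim
      case (elim m)
      then have m0: "real m \<noteq> 0" by simp
      have e1: "1 + c1 / real m = (real m + c1) / real m" using m0 by (simp add: field_simps)
      have e2: "a + c2 / real m = (a * real m + c2) / real m" using m0 by (simp add: field_simps)
      have eq: "(x / real m) / (y / real m) = x / y" for x y
        using m0 by (cases "y = 0") (simp_all add: field_simps)
      show ?case unfolding e1 e2 eq ..
    qed
  qed
qed

lemma mm_limit:
  fixes S :: nat
  assumes S: "S \<ge> 1"
  shows "\<forall>e. (\<Sum>i<S. e i) = n \<longrightarrow> (\<lambda>m. mm S (\<lambda>i. m - e i) / mm S (\<lambda>_. m)) \<longlonglongrightarrow> (1 / real S)^n"
proof (induction n)
  case 0
  show ?case
  proof (intro allI impI)
    fix e :: "nat \<Rightarrow> nat" assume "(\<Sum>i<S. e i) = 0"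
    then have "\<forall>i<S. e i = 0" by simp
    then have "mm S (\<lambda>i. m - e i) = mm S (\<lambda>_. m)" for m by (intro mm_cong) auto
    moreover have "mm S (\<lambda>_. m) \<noteq> 0" for m using mm_pos[of S "\<lambda>_. m"] by linarith
    ultimately have "(\<lambda>m. mm S (\<lambda>i. m - e i) / mm S (\<lambda>_. m)) = (\<lambda>m. 1)"
      by simp
    then show "(\<lambda>m. mm S (\<lambda>i. m - e i) / mm S (\<lambda>_. m)) \<longlonglongrightarrow> (1 / real S)^0" by simp
  qed
next
  case (Suc n)
  show ?case
  proof (intro allI impI)
    fix e :: "nat \<Rightarrow> nat" assume se: "(\<Sum>i<S. e i) = Suc n"
    obtain i where i: "i < S" "e i > 0"
    proof -
      have "\<not> (\<forall>i<S. e i = 0)"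
      proof
        assume "\<forall>i<S. e i = 0"
        then have "(\<Sum>i<S. e i) = 0" by simp
        then show False using se by simp
      qed
      then show ?thesis using that by auto
    qed
    define e' where "e' = e(i := e i - 1)"
    have se': "(\<Sum>j<S. e' j) = n"
      using sum_upd_nat[OF i(1), of e "e i - 1"] se i unfolding e'_def by simp
    have IH: "(\<lambda>m. mm S (\<lambda>j. m - e' j) / mm S (\<lambda>_. m)) \<longlonglongrightarrow> (1 / real S)^n"
      using Suc.IH se' by blast
    have F: "(\<lambda>m::nat. (real m + (1 - real (e i))) / (real S * real m + (- real n))) \<longlonglongrightarrow> 1 / real S"
      by (rule lim_ratio_lin) (use S in simp)
    have L: "(\<lambda>m. mm S (\<lambda>j. m - e' j) / mm S (\<lambda>_. m) *
              ((real m + (1 - real (e i))) / (real S * real m + (- real n)))) \<longlonglongrightarrow> (1 / real S)^n * (1 / real S)"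
      by (intro tendsto_intros IH F)
    show "(\<lambda>m. mm S (\<lambda>j. m - e j) / mm S (\<lambda>_. m)) \<longlonglongrightarrow> (1 / real S)^Suc n"
    proof (rule Lim_transform_eventually)
      show "\<forall>\<^sub>F m in sequentially. mm S (\<lambda>j. m - e' j) / mm S (\<lambda>_. m) *
              ((real m + (1 - real (e i))) / (real S * real m + (- real n))) =
            mm S (\<lambda>j. m - e j) / mm S (\<lambda>_. m)"
        using eventually_ge_at_top[of "Suc n"]
      proof eventually_elim
        case (elim m)
        have ej: "e j \<le> m" if "j < S" for j
        proof -
          have "e j \<le> (\<Sum>k<S. e k)" by (rule member_le_sum) (use that in auto)
          then show ?thesis using se elim by simp
        qed
        define t where "t = (\<lambda>j. m - e j)"
        have tt: "mm S (t(i := Suc (t i))) = mm S (\<lambda>j. m - e' j)"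
          by (rule mm_cong) (use i ej[OF i(1)] in \<open>auto simp: t_def e'_def Suc_diff_le\<close>)
        have st: "(\<Sum>j<S. t j) = S*m - Suc n"
        proof -
          have "(\<Sum>j<S. t j) = (\<Sum>j<S. m) - (\<Sum>j<S. e j)"
            unfolding t_def by (rule sum_subtractf_nat) (use ej in auto)
          then show ?thesis using se by simp
        qed
        have Sm: "S*m \<ge> m" using S by simp
        have r1: "real (Suc (t i)) = real m + (1 - real (e i))" using ej[OF i(1)] unfolding t_def by simp
        have r2: "real (Suc (\<Sum>j<S. t j)) = real S * real m + (- real n)"
        proof -
          have "Suc n \<le> S*m" using Sm elim by linarith
          then have "real (S*m - Suc n) = real S * real m - real (Suc n)" by (simp add: of_nat_diff)
          then show ?thesis unfolding st by simp
        qed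
        have step: "mm S (\<lambda>j. m - e' j) * (real m + (1 - real (e i))) = mm S t * (real S * real m + (- real n))"
          using mm_step[OF i(1), of t] unfolding tt r1 r2 .
        have "real (Suc (\<Sum>j<S. t j)) > 0" by (simp only: of_nat_0_less_iff)
        then have pos: "real S * real m + (- real n) > 0" unfolding r2 .
        have N: "mm S (\<lambda>_. m) > 0" by (rule mm_pos)
        have gen: "A / N' * (x / y) = C / N'" if "A * x = C * y" "y \<noteq> 0" for A N' x y C :: real
        proof -
          have "A / N' * (x / y) = (A * x) / (N' * y)" by simp
          also have "\<dots> = (C * y) / (N' * y)" using that(1) by simp
          also have "\<dots> = C / N'" using that(2) by simp
          finally show ?thesis .
        qed
        show ?case using gen[OF step] pos unfolding t_def by simp
      qed
    qed (use L in simp)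
  qed
qed



lemma B_as_mm: "B S (\<lambda>_. m) = (\<Sum>l\<in>PiE {..<S} (\<lambda>_. {..<m}). mm S l)"
  unfolding B_def mm_def by simp

lemma B_reindex:
  "B S (\<lambda>_. m) = (\<Sum>d\<in>PiE {..<S} (\<lambda>_. {..<m}). mm S (\<lambda>i. m - Suc (d i)))"
proof -
  define \<phi> where "\<phi> d = restrict (\<lambda>i. m - Suc (d i)) {..<S}" for d :: "nat \<Rightarrow> nat"
  let ?X = "PiE {..<S} (\<lambda>_. {..<m})"
  have inv: "\<phi> (\<phi> a) = a" if "a \<in> ?X" for a
  proof
    fix i show "\<phi> (\<phi> a) i = a i"
    proof (cases "i < S")
      case True
      then have "a i < m" using that by (auto simp: PiE_def Pi_def)
      then show ?thesis using True by (simp add: \<phi>_def Suc_diff_Suc)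
    qed (use that in \<open>auto simp: \<phi>_def PiE_def extensional_def\<close>)
  qed
  have inX: "\<phi> a \<in> ?X" if "a \<in> ?X" for a
    using that by (auto simp: \<phi>_def PiE_def Pi_def)
  have "(\<Sum>l\<in>?X. mm S l) = (\<Sum>d\<in>?X. mm S (\<lambda>i. m - Suc (d i)))"
  proof (rule sum.reindex_bij_witness[of _ \<phi> \<phi>])
    fix a assume a: "a \<in> ?X"
    show "mm S (\<lambda>i. m - Suc (\<phi> a i)) = mm S a"
      by (rule mm_cong) (use a in \<open>auto simp: \<phi>_def PiE_def Pi_def\<close>)
  qed (use inv inX in auto)
  then show ?thesis by (simp add: B_as_mm)
qed

lemma gsum_closed: "(\<Sum>j<K. (2/3::real)^Suc j) = 2 * (1 - (2/3)^K)"
  by (induction K) (simp_all add: field_simps)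

lemma gq_closed:
  fixes q s :: real
  assumes sq: "s * q = 1" and s1: "s > 1"
  shows "(\<Sum>j<K. q^Suc j) = (1 - q^K) / (s - 1)"
proof (induction K)
  case 0 then show ?case by simp
next
  case (Suc K)
  have k: "s * (q * q^K) = q^K" using sq by (simp add: mult.assoc[symmetric])
  have "(\<Sum>j<Suc K. q^Suc j) = (1 - q^K) / (s - 1) + q * q^K" using Suc by simp
  also have "\<dots> = (1 - q * q^K) / (s - 1)"
  proof -
    have "(1 - q^K) + (s - 1) * (q * q^K) = 1 - q * q^K" using k by (simp add: algebra_simps)
    then show ?thesis using s1 by (simp add: field_simps)
  qed
  finally show ?case by simp
qed

lemma lsum_closed:
  assumes "S \<ge> 2"
  shows "(\<Sum>j<K. (1 / real S)^Suc j) = (1 - (1/real S)^K) / (real S - 1)"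
  by (rule gq_closed) (use assms in auto)

lemma sum_box_prod:
  fixes f :: "nat \<Rightarrow> real"
  shows "(\<Sum>d\<in>PiE {..<S} (\<lambda>_. {..<K}). \<Prod>i<S. f (d i)) = (\<Sum>j<K. f j) ^ S"
  using prod_sum_PiE[of "{..<S}" "\<lambda>_. {..<K}" "\<lambda>_ j. f j"] by simp



lemma W_limit:
  fixes S :: nat
  assumes S: "S \<ge> 2"
  shows "(\<lambda>m. \<Sum>d\<in>PiE {..<S} (\<lambda>_. {..<m}). mm S (\<lambda>i. m - Suc (d i)) / mm S (\<lambda>_. m))
           \<longlonglongrightarrow> (1 / (real S - 1))^S"
proof -
  define box where "box m = PiE {..<S} (\<lambda>_. {..<m::nat})" for m
  define r where "r m d = mm S (\<lambda>i. m - Suc (d i)) / mm S (\<lambda>_. m)" for m and d :: "nat \<Rightarrow> nat"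
  define g where "g d = 3/2 * (\<Prod>i<S. (2/3::real)^Suc (d i))" for d :: "nat \<Rightarrow> nat"
  define v where "v d = (\<Prod>i<S. (1/real S)^Suc (d i))" for d :: "nat \<Rightarrow> nat"
  define L where "L = (1 / (real S - 1))^S"
  define Ginf where "Ginf = 3/2 * (2::real)^S"
  have finbox: "finite (box m)" for m unfolding box_def by (intro finite_PiE) auto
  have boxmono: "box K \<subseteq> box m" if "K \<le> m" for K m
    unfolding box_def using that by (intro PiE_mono) auto
  have rlim: "(\<lambda>m. r m d) \<longlonglongrightarrow> v d" for d
  proof -
    have "(\<lambda>m. mm S (\<lambda>i. m - (\<lambda>i. Suc (d i)) i) / mm S (\<lambda>_. m)) \<longlonglongrightarrow> (1 / real S)^(\<Sum>i<S. Suc (d i))"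
      using mm_limit[of S "\<Sum>i<S. Suc (d i)"] S by auto
    then show ?thesis unfolding r_def v_def by (simp add: power_sum)
  qed
  have rnn: "r m d \<ge> 0" for m d unfolding r_def using mm_nonneg mm_pos by (simp add: less_imp_le)
  have rdom: "r m d \<le> g d" if m: "m \<ge> 1" and d: "d \<in> box m" for m d
  proof -
    have dm: "d i < m" if "i < S" for i using d that unfolding box_def by (auto simp: PiE_def Pi_def)
    define t where "t i = m - Suc (d i)" for i
    have tb: "\<forall>i<S. t i \<le> m" unfolding t_def by auto
    define X where "X = (\<Sum>i<S. Suc (d i))"
    have X: "X \<le> S*m"
    proof -
      have "X \<le> (\<Sum>i<S. m)" unfolding X_def by (rule sum_mono) (use dm in \<open>auto simp: Suc_le_eq\<close>)
      then show ?thesis by simp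
    qed
    have st: "(\<Sum>i<S. t i) = S*m - X"
    proof -
      have "(\<Sum>i<S. t i) = (\<Sum>i<S. m) - X"
        unfolding t_def X_def by (rule sum_subtractf_nat) (use dm in \<open>auto simp: Suc_le_eq\<close>)
      then show ?thesis by simp
    qed
    have "mm S t \<le> 3/2 * mm S (\<lambda>_. m) * (2/3)^(S*m - (\<Sum>i<S. t i))"
      by (rule dom_bound[OF S m tb])
    also have "S*m - (\<Sum>i<S. t i) = X" using st X by simp
    finally have "mm S t \<le> 3/2 * mm S (\<lambda>_. m) * (2/3)^X" .
    then have "mm S t / mm S (\<lambda>_. m) \<le> 3/2 * (2/3)^X"
      using mm_pos[of S "\<lambda>_. m"] by (simp add: field_simps)
    also have "(2/3::real)^X = (\<Prod>i<S. (2/3::real)^Suc (d i))" unfolding X_def by (simp add: power_sum)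
    finally show ?thesis unfolding r_def g_def t_def .
  qed
  have Gsum: "(\<Sum>d\<in>box K. g d) = 3/2 * (2 * (1 - (2/3)^K))^S" for K
  proof -
    have "(\<Sum>d\<in>box K. g d) = 3/2 * (\<Sum>d\<in>box K. (\<Prod>i<S. (2/3::real)^Suc (d i)))"
      unfolding g_def by (simp add: sum_distrib_left)
    also have "(\<Sum>d\<in>box K. (\<Prod>i<S. (2/3::real)^Suc (d i))) = (\<Sum>j<K. (2/3::real)^Suc j)^S"
      unfolding box_def by (rule sum_box_prod)
    finally show ?thesis by (simp only: gsum_closed)
  qed
  have Vsum: "(\<Sum>d\<in>box K. v d) = ((1 - (1/real S)^K) / (real S - 1))^S" for K
  proof -
    have "(\<Sum>d\<in>box K. v d) = (\<Sum>j<K. (1/real S)^Suc j)^S"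
      unfolding v_def box_def by (rule sum_box_prod)
    then show ?thesis by (simp only: lsum_closed[OF S])
  qed
  have Glim: "(\<lambda>K. (\<Sum>d\<in>box K. g d)) \<longlonglongrightarrow> Ginf"
  proof -
    have "(\<lambda>K. 3/2 * (2 * (1 - (2/3::real)^K))^S) \<longlonglongrightarrow> 3/2 * (2 * (1 - 0))^S"
      by (intro tendsto_intros LIMSEQ_power_zero) auto
    then show ?thesis unfolding Gsum Ginf_def by simp
  qed
  have Gle: "(\<Sum>d\<in>box K. g d) \<le> Ginf" for K
  proof -
    have "2 * (1 - (2/3::real)^K) \<le> 2" by simp
    moreover have "0 \<le> 2 * (1 - (2/3::real)^K)" by (simp add: power_le_one)
    ultimately have "(2 * (1 - (2/3::real)^K))^S \<le> 2^S" by (intro power_mono)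
    then show ?thesis unfolding Gsum Ginf_def by simp
  qed
  have Vlim: "(\<lambda>K. (\<Sum>d\<in>box K. v d)) \<longlonglongrightarrow> L"
  proof -
    have "(\<lambda>K. ((1 - (1/real S)^K) / (real S - 1))^S) \<longlonglongrightarrow> ((1 - 0) / (real S - 1))^S"
      using S by (intro tendsto_intros LIMSEQ_power_zero) auto
    then show ?thesis unfolding Vsum L_def by simp
  qed
  show ?thesis unfolding L_def[symmetric] r_def[symmetric] box_def[symmetric]
  proof (rule LIMSEQ_I)
    fix \<epsilon> :: real assume e: "\<epsilon> > 0"
    then have e3: "\<epsilon>/3 > 0" by simp
    obtain K1 where K1: "\<forall>K\<ge>K1. norm ((\<Sum>d\<in>box K. g d) - Ginf) < \<epsilon>/3"
      using LIMSEQ_D[OF Glim e3] by blast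
    obtain K2 where K2: "\<forall>K\<ge>K2. norm ((\<Sum>d\<in>box K. v d) - L) < \<epsilon>/3"
      using LIMSEQ_D[OF Vlim e3] by blast
    define K where "K = max K1 K2"
    have "norm ((\<Sum>d\<in>box K. g d) - Ginf) < \<epsilon>/3" using K1 unfolding K_def by simp
    then have gK: "Ginf - (\<Sum>d\<in>box K. g d) < \<epsilon>/3" unfolding real_norm_def by linarith
    have "norm ((\<Sum>d\<in>box K. v d) - L) < \<epsilon>/3" using K2 unfolding K_def by simp
    then have vK: "\<bar>(\<Sum>d\<in>box K. v d) - L\<bar> < \<epsilon>/3" by simp
    have fl: "(\<lambda>m. \<Sum>d\<in>box K. r m d) \<longlonglongrightarrow> (\<Sum>d\<in>box K. v d)"
      by (intro tendsto_sum rlim)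
    obtain M0 where M0: "\<forall>m\<ge>M0. norm ((\<Sum>d\<in>box K. r m d) - (\<Sum>d\<in>box K. v d)) < \<epsilon>/3"
      using LIMSEQ_D[OF fl e3] by blast
    show "\<exists>no. \<forall>m\<ge>no. norm ((\<Sum>d\<in>box m. r m d) - L) < \<epsilon>"
    proof (intro exI allI impI)
      fix m assume m: "m \<ge> max M0 (max K 1)"
      have Km: "box K \<subseteq> box m" using m by (intro boxmono) auto
      have split: "(\<Sum>d\<in>box m. r m d) = (\<Sum>d\<in>box m - box K. r m d) + (\<Sum>d\<in>box K. r m d)"
        by (rule sum.subset_diff[OF Km finbox])
      have t0: "(\<Sum>d\<in>box m - box K. r m d) \<ge> 0" by (intro sum_nonneg rnn)
      have "(\<Sum>d\<in>box m - box K. r m d) \<le> (\<Sum>d\<in>box m - box K. g d)"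
        by (intro sum_mono rdom) (use m in auto)
      also have "\<dots> = (\<Sum>d\<in>box m. g d) - (\<Sum>d\<in>box K. g d)"
        using sum.subset_diff[OF Km finbox, of g] by simp
      also have "\<dots> \<le> Ginf - (\<Sum>d\<in>box K. g d)" using Gle[of m] by simp
      finally have t1: "(\<Sum>d\<in>box m - box K. r m d) < \<epsilon>/3" using gK by simp
      have h: "\<bar>(\<Sum>d\<in>box K. r m d) - (\<Sum>d\<in>box K. v d)\<bar> < \<epsilon>/3" using M0 m by auto
      show "norm ((\<Sum>d\<in>box m. r m d) - L) < \<epsilon>"
        unfolding split real_norm_def using t0 t1 h vK by (simp only: abs_less_iff) linarith
    qed
  qed
qed



theorem mainTheorem17:
  fixes S :: nat
  assumes "S \<ge> 2"
  shows "(\<lambda>m::nat. B S (\<lambda>_. m)) \<sim>[at_top]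
         (\<lambda>m::nat. real S powr (real S * real m + 1/2) /
            ((2 * pi * real m) powr ((real S - 1) / 2) * (real S - 1) ^ S))"
proof (rule asymp_equivI')
  note S = assms
  define s where "s n = fact n / (sqrt (2*pi*real n) * (real n / exp 1) ^ n)" for n
  define W where "W m = (\<Sum>d\<in>PiE {..<S} (\<lambda>_. {..<m}). mm S (\<lambda>i. m - Suc (d i)) / mm S (\<lambda>_. m))" for m
  define T where "T m = real S powr (real S * real m + 1/2) /
            ((2 * pi * real m) powr ((real S - 1) / 2) * (real S - 1) ^ S)" for m :: nat
  have sl: "s \<longlonglongrightarrow> 1" unfolding s_def by (rule stirling_ratio)
  have sl2: "(\<lambda>m. s (S*m)) \<longlonglongrightarrow> 1"
  proof -
    have "strict_mono (\<lambda>m::nat. S*m)" using S by (intro strict_monoI) simp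
    from LIMSEQ_subseq_LIMSEQ[OF sl this] show ?thesis by (simp add: o_def)
  qed
  have Wl: "W \<longlonglongrightarrow> (1 / (real S - 1))^S" unfolding W_def by (rule W_limit[OF S])
  have S1: "real S - 1 > 0" using S by simp
  have E: "(\<lambda>m. W m * s (S*m) * (real S - 1)^S / s m ^ S) \<longlonglongrightarrow> (1 / (real S - 1))^S * 1 * (real S - 1)^S / 1 ^ S"
    by (intro tendsto_intros Wl sl sl2) simp
  have E1: "(1 / (real S - 1))^S * 1 * (real S - 1)^S / 1 ^ S = 1"
    using S1 by (simp add: power_one_over field_simps)
  show "(\<lambda>m. B S (\<lambda>_. m) / T m) \<longlonglongrightarrow> 1"
  proof (rule Lim_transform_eventually[OF E[unfolded E1]])
    show "\<forall>\<^sub>F m in sequentially. W m * s (S*m) * (real S - 1)^S / s m ^ S = B S (\<lambda>_. m) / T m"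
      using eventually_ge_at_top[of "1::nat"]
    proof eventually_elim
      case (elim m)
      then have m0: "real m > 0" by simp
      define N where "N = mm S (\<lambda>_. m)"
      have N0: "N > 0" unfolding N_def by (rule mm_pos)
      have BN: "B S (\<lambda>_. m) = N * W m"
      proof -
        have "W m = (\<Sum>d\<in>PiE {..<S} (\<lambda>_. {..<m}). mm S (\<lambda>i. m - Suc (d i))) / N"
          unfolding W_def N_def by (simp add: sum_divide_distrib)
        then show ?thesis unfolding B_reindex using N0 by simp
      qed
      define F where "F = (fact (S*m) :: real)"
      define f where "f = (fact m :: real)"
      define u where "u = sqrt (2*pi*real m)"
      define P where "P = (real m / exp 1) ^ (S*m)"
      define Q where "Q = real S ^ (S*m)"
      define rS where "rS = sqrt (real S)"
      define c where "c = (real S - 1)^S"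
      have pos: "F > 0" "f > 0" "u > 0" "P > 0" "Q > 0" "rS > 0" "c > 0"
        unfolding F_def f_def u_def P_def Q_def rS_def c_def using m0 S S1 by auto
      have N_eq: "N = F / f^S" unfolding N_def mm_def F_def f_def by simp
      have sSm: "s (S*m) = F / (rS * u * (Q * P))"
      proof -
        have "sqrt (2*pi*real (S*m)) = rS * u" unfolding rS_def u_def
          by (simp add: real_sqrt_mult[symmetric] mult_ac)
        moreover have "(real (S*m) / exp 1) ^ (S*m) = Q * P"
          unfolding Q_def P_def by (simp add: power_mult_distrib[symmetric])
        ultimately show ?thesis unfolding s_def F_def by (simp add: mult.assoc)
      qed
      have sm: "s m ^ S = f^S / (u * u^(S - 1) * P)"
      proof -
        define R where "R = (real m / exp 1)^m"
        have "s m = f / (u * R)" unfolding s_def f_def u_def R_def ..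
        then have "s m ^ S = f^S / (u^S * R^S)" by (simp add: power_divide power_mult_distrib)
        moreover have "u^S = u * u^(S-1)" using S by (simp add: power_Suc[symmetric])
        moreover have "R^S = P" unfolding P_def R_def by (simp only: power_mult[symmetric] mult.commute)
        ultimately show ?thesis by simp
      qed
      have T_eq: "T m = Q * rS / (u^(S-1) * c)"
      proof -
        have "real S powr (real S * real m + 1/2) = Q * rS"
          unfolding Q_def rS_def using S by (simp add: powr_add powr_half_sqrt powr_realpow[symmetric])
        moreover have "(2 * pi * real m) powr ((real S - 1) / 2) = u^(S-1)"
        proof -
          have "(real S - 1) / 2 = (1/2) * real (S - 1)" using S by (simp add: of_nat_diff)
          then have "(2 * pi * real m) powr ((real S - 1) / 2) = ((2 * pi * real m) powr (1/2)) powr real (S - 1)"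
            by (simp add: powr_powr)
          also have "\<dots> = u^(S-1)" unfolding u_def using m0
            by (simp add: powr_half_sqrt powr_realpow)
          finally show ?thesis .
        qed
        ultimately show ?thesis unfolding T_def c_def by simp
      qed
      have "B S (\<lambda>_. m) / T m = N * W m / (Q * rS / (u^(S-1) * c))" unfolding BN T_eq ..
      also have "\<dots> = W m * s (S*m) * c / s m ^ S"
        unfolding sSm sm N_eq using pos by (simp add: field_simps)
      finally show ?case unfolding c_def by simp
    qed
  qed
qed

end
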